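(* Fix an integer $r\ge1$. For an integer $m$ let $N=mr$, and let $\xi^{(N,k,k')}_{i,j}$, $k,k'\in\{1,\dots,r\}$, $i,j\in\{1,\dots,m\}$, be independent random variables such that $\xi^{(N,k,k)}_{i,j}$ is Bernoulli with parameter $q_N$, where $\frac1{q_N}=o\left(\frac N{\log N}\right)$, and for $k\ne k'$, $\xi^{(N,k,k')}_{i,j}$ is Bernoulli with parameter $q^{k,k'}_N$, where $q^{k,k'}_N=o(q_N)$. Define $d_i^{(N,k)}=\sum_{k'=1}^r\sum_{j=1}^m\xi^{(N,k,k')}_{i,j}$ and $\tilde d_i^{(N,k)}=\sum_{k'=1}^r\sum_{j=1}^m\xi^{(N,k,k')}_{j,i}$. Then there is a constant $C$ such that, almost surely, \[\limsup_{m\to\infty}\sup_{k\in\{1,\dots,r\}}\sup_{i\in\{1,\dots,m\}}\frac1{q_N}\left(\frac{d_i^{(N,k)}}N+\frac{\tilde d_i^{(N,k)}}N\right)\le C,\] and moreover \[\sup_{k\in\{1,\dots,r\}}\sup_{i\in\{1,\dots,m\}}\left|\frac{d_i^{(N,k)}}{Nq_N}-\frac1r\right|\xrightarrow[N\to\infty]{}0\quad\text{almost surely}.\]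
   Context: The limit $N\to\infty$ is taken with $r$ fixed and $m\to\infty$. *)

theory Defs
  imports "HOL-Probability.Probability" "HOL-Library.Landau_Symbols"
begin

text \<open>Random variables xi m k k' i j, with N = m*r.
  Out-degree d and in-degree dtilde of vertex i in block k.\<close>

definition out_deg :: "nat \<Rightarrow> (nat \<Rightarrow> nat \<Rightarrow> nat \<Rightarrow> nat \<Rightarrow> nat \<Rightarrow> 'a \<Rightarrow> real)
    \<Rightarrow> nat \<Rightarrow> nat \<Rightarrow> nat \<Rightarrow> 'a \<Rightarrow> real" where
  "out_deg r \<xi> m k i x = (\<Sum>k'\<in>{1..r}. \<Sum>j\<in>{1..m}. \<xi> m k k' i j x)"

definition in_deg :: "nat \<Rightarrow> (nat \<Rightarrow> nat \<Rightarrow> nat \<Rightarrow> nat \<Rightarrow> nat \<Rightarrow> 'a \<Rightarrow> real)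
    \<Rightarrow> nat \<Rightarrow> nat \<Rightarrow> nat \<Rightarrow> 'a \<Rightarrow> real" where
  "in_deg r \<xi> m k i x = (\<Sum>k'\<in>{1..r}. \<Sum>j\<in>{1..m}. \<xi> m k k' j i x)"

definition bernoulli_rv :: "'a measure \<Rightarrow> ('a \<Rightarrow> real) \<Rightarrow> real \<Rightarrow> bool" where
  "bernoulli_rv M X p \<longleftrightarrow> X \<in> borel_measurable M \<and> (AE x in M. X x \<in> {0, 1})
     \<and> measure M {x \<in> space M. X x = 1} = p"

end

theory Submission
  imports Defs
begin

context prob_space
begin

lemma mgf_bound:
  fixes X :: "'i \<Rightarrow> 'a \<Rightarrow> real"
  assumes fin: "finite J" and ind: "indep_vars (\<lambda>_. borel) X J"
    and ae: "\<And>t. t \<in> J \<Longrightarrow> AE x in M. X t x \<in> {0, 1}"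
  shows "integrable M (\<lambda>x. exp (l * (\<Sum>t\<in>J. X t x)))"
    and "expectation (\<lambda>x. exp (l * (\<Sum>t\<in>J. X t x)))
         \<le> exp ((\<Sum>t\<in>J. prob {x\<in>space M. X t x = 1}) * (exp l - 1))"
proof -
  have rv[measurable]: "\<And>t. t \<in> J \<Longrightarrow> X t \<in> borel_measurable M"
    using ind unfolding indep_vars_def by auto
  define Y where "Y t x = exp (l * X t x)" for t x
  have indY: "indep_vars (\<lambda>_. borel) Y J"
    unfolding Y_def by (rule indep_vars_compose2[OF ind]) measurable
  define A where "A t = {x\<in>space M. X t x = 1}" for t
  have A[measurable]: "t \<in> J \<Longrightarrow> A t \<in> sets M" for t unfolding A_def by measurable
  define g where "g t x = 1 + (exp l - 1) * indicator (A t) x" for t x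
  have gm[measurable]: "t \<in> J \<Longrightarrow> g t \<in> borel_measurable M" for t unfolding g_def by measurable
  have gi: "integrable M (g t)" if t: "t \<in> J" for t
    unfolding g_def using A[OF t] by (intro Bochner_Integration.integrable_add integrable_mult_right) (auto simp: emeasure_eq_measure)
  have ig: "expectation (g t) = 1 + (exp l - 1) * prob (A t)" if t: "t \<in> J" for t
    unfolding g_def using A[OF t] by (subst Bochner_Integration.integral_add) (auto simp: emeasure_eq_measure prob_space)
  have aeY: "AE x in M. Y t x = g t x" if t: "t \<in> J" for t
    using ae[OF t] AE_space by eventually_elim (auto simp: Y_def g_def A_def indicator_def)
  have Ym[measurable]: "Y t \<in> borel_measurable M" if t: "t \<in> J" for t
    unfolding Y_def using t by measurable
  have Yi: "integrable M (Y t)" if t: "t \<in> J" for t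
    using integrable_cong_AE[OF Ym[OF t] gm[OF t] aeY[OF t]] gi[OF t] by simp
  have iY: "expectation (Y t) = 1 + (exp l - 1) * prob (A t)" if t: "t \<in> J" for t
    using integral_cong_AE[OF Ym[OF t] gm[OF t] aeY[OF t]] ig[OF t] by simp
  have eq: "(\<lambda>x. exp (l * (\<Sum>t\<in>J. X t x))) = (\<lambda>x. \<Prod>t\<in>J. Y t x)"
    using fin by (simp add: Y_def sum_distrib_left exp_sum)
  show "integrable M (\<lambda>x. exp (l * (\<Sum>t\<in>J. X t x)))"
    unfolding eq using indep_vars_integrable[OF fin indY Yi] by simp
  have "expectation (\<lambda>x. exp (l * (\<Sum>t\<in>J. X t x))) = (\<Prod>t\<in>J. 1 + (exp l - 1) * prob (A t))"
    unfolding eq using indep_vars_lebesgue_integral[OF fin indY Yi] iY by simp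
  also have "\<dots> \<le> (\<Prod>t\<in>J. exp (prob (A t) * (exp l - 1)))"
  proof (rule prod_mono, safe)
    fix t assume "t \<in> J"
    have p: "0 \<le> prob (A t)" "prob (A t) \<le> 1" by auto
    have "1 + (exp l - 1) * prob (A t) = (1 - prob (A t)) + exp l * prob (A t)"
      by (simp add: algebra_simps)
    also have "\<dots> \<ge> 0" using p by (intro add_nonneg_nonneg mult_nonneg_nonneg) auto
    finally show "0 \<le> 1 + (exp l - 1) * prob (A t)" .
    show "1 + (exp l - 1) * prob (A t) \<le> exp (prob (A t) * (exp l - 1))"
      using exp_ge_add_one_self[of "prob (A t) * (exp l - 1)"] by (simp add: mult.commute)
  qed
  also have "\<dots> = exp ((\<Sum>t\<in>J. prob (A t)) * (exp l - 1))"
    using fin by (simp add: exp_sum sum_distrib_right)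
  finally show "expectation (\<lambda>x. exp (l * (\<Sum>t\<in>J. X t x)))
         \<le> exp ((\<Sum>t\<in>J. prob {x\<in>space M. X t x = 1}) * (exp l - 1))"
    by (simp add: A_def)
qed

lemma chernoff_gen:
  fixes X :: "'i \<Rightarrow> 'a \<Rightarrow> real"
  assumes fin: "finite J" and ind: "indep_vars (\<lambda>_. borel) X J"
    and ae: "\<And>t. t \<in> J \<Longrightarrow> AE x in M. X t x \<in> {0, 1}"
  shows "prob {x\<in>space M. l * a \<le> l * (\<Sum>t\<in>J. X t x)}
     \<le> exp ((\<Sum>t\<in>J. prob {x\<in>space M. X t x = 1}) * (exp l - 1) - l * a)"
proof -
  have rv[measurable]: "\<And>t. t \<in> J \<Longrightarrow> X t \<in> borel_measurable M"
    using ind unfolding indep_vars_def by auto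
  have "{x\<in>space M. l * a \<le> l * (\<Sum>t\<in>J. X t x)} = {x\<in>space M. exp (l * a) \<le> exp (l * (\<Sum>t\<in>J. X t x))}"
    by simp
  also have "prob \<dots> \<le> expectation (\<lambda>x. exp (l * (\<Sum>t\<in>J. X t x))) / exp (l * a)"
    by (rule integral_Markov_inequality_measure[OF mgf_bound(1)[OF fin ind ae], of "space M"]) auto
  also have "\<dots> \<le> exp ((\<Sum>t\<in>J. prob {x\<in>space M. X t x = 1}) * (exp l - 1)) / exp (l * a)"
    by (intro divide_right_mono mgf_bound(2)[OF fin ind ae]) auto
  also have "\<dots> = exp ((\<Sum>t\<in>J. prob {x\<in>space M. X t x = 1}) * (exp l - 1) - l * a)"
    by (simp add: exp_diff)
  finally show ?thesis .
qed

lemma chernoff_upper: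
  fixes X :: "'i \<Rightarrow> 'a \<Rightarrow> real"
  assumes fin: "finite J" and ind: "indep_vars (\<lambda>_. borel) X J"
    and ae: "\<And>t. t \<in> J \<Longrightarrow> AE x in M. X t x \<in> {0, 1}" and l: "l > 0"
  shows "prob {x\<in>space M. a \<le> (\<Sum>t\<in>J. X t x)}
     \<le> exp ((\<Sum>t\<in>J. prob {x\<in>space M. X t x = 1}) * (exp l - 1) - l * a)"
  using chernoff_gen[OF fin ind ae, of l a] l by simp

lemma chernoff_lower:
  fixes X :: "'i \<Rightarrow> 'a \<Rightarrow> real"
  assumes fin: "finite J" and ind: "indep_vars (\<lambda>_. borel) X J"
    and ae: "\<And>t. t \<in> J \<Longrightarrow> AE x in M. X t x \<in> {0, 1}" and l: "l > 0"
  shows "prob {x\<in>space M. (\<Sum>t\<in>J. X t x) \<le> a}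
     \<le> exp ((\<Sum>t\<in>J. prob {x\<in>space M. X t x = 1}) * (exp (- l) - 1) + l * a)"
  using chernoff_gen[OF fin ind ae, of "-l" a] l by simp

lemma exp_neg_bound:
  fixes l :: real assumes "0 \<le> l"
  shows "exp (- l) \<le> 1 - l + l\<^sup>2"
proof -
  have "1 + l \<le> exp l" by (rule exp_ge_add_one_self)
  have pos: "0 < 1 + l" using assms by simp
  have "exp (- l) = 1 / exp l" by (simp add: exp_minus field_simps)
  also have "\<dots> \<le> 1 / (1 + l)" using \<open>1 + l \<le> exp l\<close> pos by (intro divide_left_mono) auto
  also have "\<dots> \<le> 1 - l + l\<^sup>2"
  proof -
    have "1 \<le> (1 - l + l\<^sup>2) * (1 + l)" using assms by (simp add: algebra_simps power2_eq_square power3_eq_cube)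
    then show ?thesis using pos by (simp add: divide_le_eq)
  qed
  finally show ?thesis .
qed

lemma dev_bound:
  fixes X :: "'i \<Rightarrow> 'a \<Rightarrow> real"
  assumes fin: "finite J" and ind: "indep_vars (\<lambda>_. borel) X J"
    and ae: "\<And>t. t \<in> J \<Longrightarrow> AE x in M. X t x \<in> {0, 1}"
    and A: "A > 0" and e: "0 < e" "e \<le> 1"
    and mu1: "A \<le> (\<Sum>t\<in>J. prob {x\<in>space M. X t x = 1})"
    and mu2: "(\<Sum>t\<in>J. prob {x\<in>space M. X t x = 1}) \<le> A * (1 + e / 4)"
  shows "prob {x\<in>space M. A * (1 + e) \<le> (\<Sum>t\<in>J. X t x)} \<le> exp (- (A * e\<^sup>2 / 16))"
    and "prob {x\<in>space M. (\<Sum>t\<in>J. X t x) \<le> A * (1 - e)} \<le> exp (- (A * e\<^sup>2 / 16))"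
proof -
  define mu where "mu = (\<Sum>t\<in>J. prob {x\<in>space M. X t x = 1})"
  define l where "l = e / 2"
  have l: "0 < l" "l \<le> 1" using e by (auto simp: l_def)
  have "prob {x\<in>space M. A * (1 + e) \<le> (\<Sum>t\<in>J. X t x)} \<le> exp (mu * (exp l - 1) - l * (A * (1 + e)))"
    unfolding mu_def by (rule chernoff_upper[OF fin ind ae l(1)])
  also have "\<dots> \<le> exp (- (A * e\<^sup>2 / 16))"
  proof -
    have b: "exp l - 1 \<le> l + l\<^sup>2" using exp_bound[of l] l by simp
    have mpos: "0 \<le> mu" using A mu1 by (simp add: mu_def)
    have "mu * (exp l - 1) \<le> mu * (l + l\<^sup>2)" using b mpos by (rule mult_left_mono)
    also have "\<dots> \<le> A * (1 + e / 4) * (l + l\<^sup>2)" using mu2 l by (intro mult_right_mono) (auto simp: mu_def)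
    finally have 1: "mu * (exp l - 1) \<le> A * (1 + e / 4) * (l + l\<^sup>2)" .
    have "A * (1 + e / 4) * (l + l\<^sup>2) - l * (A * (1 + e)) = A * (- e\<^sup>2 / 8 + e^3 / 16)"
      by (simp add: l_def algebra_simps power2_eq_square power3_eq_cube)
    also have "\<dots> \<le> A * (- e\<^sup>2 / 16)"
    proof -
      have "e^3 \<le> e\<^sup>2" using e by (simp add: power3_eq_cube power2_eq_square mult_left_le_one_le)
      then show ?thesis using A by (intro mult_left_mono) auto
    qed
    finally show ?thesis using 1 by simp
  qed
  finally show "prob {x\<in>space M. A * (1 + e) \<le> (\<Sum>t\<in>J. X t x)} \<le> exp (- (A * e\<^sup>2 / 16))" .
  have "prob {x\<in>space M. (\<Sum>t\<in>J. X t x) \<le> A * (1 - e)} \<le> exp (mu * (exp (- l) - 1) + l * (A * (1 - e)))"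
    unfolding mu_def by (rule chernoff_lower[OF fin ind ae l(1)])
  also have "\<dots> \<le> exp (- (A * e\<^sup>2 / 16))"
  proof -
    have b: "exp (- l) - 1 \<le> - l + l\<^sup>2" using exp_neg_bound[of l] l by simp
    have np: "exp (- l) - 1 \<le> 0" using l by simp
    have "mu * (exp (- l) - 1) \<le> A * (exp (- l) - 1)" using np mu1 by (intro mult_right_mono_neg) (auto simp: mu_def)
    also have "\<dots> \<le> A * (- l + l\<^sup>2)" using b A by (intro mult_left_mono) auto
    finally have 1: "mu * (exp (- l) - 1) \<le> A * (- l + l\<^sup>2)" .
    have "A * (- l + l\<^sup>2) + l * (A * (1 - e)) = A * (- e\<^sup>2 / 4)"
      by (simp add: l_def field_simps power2_eq_square)
    also have "\<dots> \<le> A * (- e\<^sup>2 / 16)" using A by (intro mult_left_mono) auto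
    finally show ?thesis using 1 by simp
  qed
  finally show "prob {x\<in>space M. (\<Sum>t\<in>J. X t x) \<le> A * (1 - e)} \<le> exp (- (A * e\<^sup>2 / 16))" .
qed

end

lemma out_deg_sum: "out_deg r \<xi> m k i x = (\<Sum>(a,b,c,d)\<in>{k}\<times>{1..r}\<times>{i}\<times>{1..m}. \<xi> m a b c d x)"
  by (simp add: out_deg_def sum.cartesian_product[symmetric])
lemma in_deg_sum: "in_deg r \<xi> m k i x = (\<Sum>(a,b,c,d)\<in>{k}\<times>{1..r}\<times>{1..m}\<times>{i}. \<xi> m a b c d x)"
  by (simp add: in_deg_def sum.cartesian_product[symmetric])
lemma sum4o: "(\<Sum>(a,b,c,d)\<in>{k}\<times>{1..r}\<times>{i}\<times>{1..m}. f a b c d) = (\<Sum>b\<in>{1..r}. \<Sum>d\<in>{1..m}. f k b i d)"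
  by (simp add: sum.cartesian_product[symmetric])
lemma sum4i: "(\<Sum>(a,b,c,d)\<in>{k}\<times>{1..r}\<times>{1..m}\<times>{i}. f a b c d) = (\<Sum>b\<in>{1..r}. \<Sum>d\<in>{1..m}. f k b d i)"
  by (simp add: sum.cartesian_product[symmetric])

lemma dev_aux:
  fixes u A e R :: real
  assumes A: "A > 0" and R: "R \<ge> 1" and e: "e \<ge> 0" and l: "A * (1 - e) < u" and u: "u < A * (1 + e)"
  shows "\<bar>u / (A * R) - 1 / R\<bar> \<le> e"
proof -
  have AR: "A * R > 0" using A R by simp
  have "u / (A * R) - 1 / R = (u - A) / (A * R)" using A R by (simp add: field_simps)
  then have "\<bar>u / (A * R) - 1 / R\<bar> = \<bar>u - A\<bar> / (A * R)" using AR by simp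
  also have "\<dots> \<le> (A * e) / (A * R)"
    using l u AR by (intro divide_right_mono) (auto simp: algebra_simps abs_le_iff)
  also have "\<dots> = e / R" using A by simp
  also have "\<dots> \<le> e"
  proof -
    have "e * 1 \<le> e * R" using R e by (intro mult_left_mono) auto
    then show ?thesis using R by (simp add: divide_le_eq)
  qed
  finally show ?thesis .
qed

lemma sum_aux:
  fixes u w A N Q :: real
  assumes Q: "Q > 0" and N: "N > 0" and u: "u < A * 2" and i: "w < A * 2" and AN: "A = N / R * Q" and R: "R \<ge> 1"
  shows "1 / Q * (u / N + w / N) \<le> 4"
proof -
  have "u / N + w / N = (u + w) / N" by (simp add: add_divide_distrib)
  also have "\<dots> \<le> (4 * A) / N" using u i N by (intro divide_right_mono) auto
  finally have 1: "u / N + w / N \<le> 4 * A / N" .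
  have "1 / Q * (u / N + w / N) \<le> 1 / Q * (4 * A / N)" using 1 Q by (intro mult_left_mono) auto
  also have "\<dots> = 4 / R" using Q N unfolding AN by (simp add: field_simps)
  also have "\<dots> \<le> 4" using R by (simp add: divide_le_eq)
  finally show ?thesis .
qed

theorem lemma4:
  fixes M :: "'a measure" and r :: nat
    and \<xi> :: "nat \<Rightarrow> nat \<Rightarrow> nat \<Rightarrow> nat \<Rightarrow> nat \<Rightarrow> 'a \<Rightarrow> real"
    and q :: "nat \<Rightarrow> real" and q' :: "nat \<Rightarrow> nat \<Rightarrow> nat \<Rightarrow> real"
  assumes "prob_space M"
    and "r \<ge> 1"
    and indep: "\<And>m. prob_space.indep_vars M (\<lambda>_. borel)
                   (\<lambda>(k, k', i, j). \<xi> m k k' i j) ({1..r} \<times> {1..r} \<times> {1..m} \<times> {1..m})"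
    and diag: "\<And>m k i j. k \<in> {1..r} \<Longrightarrow> i \<in> {1..m} \<Longrightarrow> j \<in> {1..m} \<Longrightarrow>
                  bernoulli_rv M (\<xi> m k k i j) (q m)"
    and offdiag: "\<And>m k k' i j. k \<in> {1..r} \<Longrightarrow> k' \<in> {1..r} \<Longrightarrow> k \<noteq> k' \<Longrightarrow>
                  i \<in> {1..m} \<Longrightarrow> j \<in> {1..m} \<Longrightarrow> bernoulli_rv M (\<xi> m k k' i j) (q' m k k')"
    and qpos: "\<And>m. m \<ge> 1 \<Longrightarrow> q m > 0"
    and qdense: "(\<lambda>m. 1 / q m) \<in> o(\<lambda>m. real (m * r) / ln (real (m * r)))"
    and qsmall: "\<And>k k'. k \<in> {1..r} \<Longrightarrow> k' \<in> {1..r} \<Longrightarrow> k \<noteq> k' \<Longrightarrow>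
                  (\<lambda>m. q' m k k') \<in> o(q)"
  shows "(\<exists>C::real. AE x in M.
            limsup (\<lambda>m. ereal (SUP (k, i) \<in> {1..r} \<times> {1..m}.
                1 / q m * (out_deg r \<xi> m k i x / real (m * r) + in_deg r \<xi> m k i x / real (m * r))))
            \<le> ereal C)
       \<and> (AE x in M.
            (\<lambda>m. SUP (k, i) \<in> {1..r} \<times> {1..m}.
                \<bar>out_deg r \<xi> m k i x / (real (m * r) * q m) - 1 / real r\<bar>) \<longlonglongrightarrow> 0)"
proof -
  interpret prob_space M by fact
  have r0: "0 < r" using assms(2) by simp
  have bern: "bernoulli_rv M (\<xi> m a b c d) (if a = b then q m else q' m a b)"
    if "a \<in> {1..r}" "b \<in> {1..r}" "c \<in> {1..m}" "d \<in> {1..m}" for m a b c d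
    using diag offdiag that by (cases "a = b") auto
  have meas: "\<xi> m a b c d \<in> borel_measurable M"
    if "a \<in> {1..r}" "b \<in> {1..r}" "c \<in> {1..m}" "d \<in> {1..m}" for m a b c d
    using bern[OF that] unfolding bernoulli_rv_def by auto
  have aeb: "AE x in M. \<xi> m a b c d x \<in> {0, 1}"
    if "a \<in> {1..r}" "b \<in> {1..r}" "c \<in> {1..m}" "d \<in> {1..m}" for m a b c d
    using bern[OF that] unfolding bernoulli_rv_def by auto
  have probb: "prob {x\<in>space M. \<xi> m a b c d x = 1} = (if a = b then q m else q' m a b)"
    if "a \<in> {1..r}" "b \<in> {1..r}" "c \<in> {1..m}" "d \<in> {1..m}" for m a b c d
    using bern[OF that] unfolding bernoulli_rv_def by auto
  have q'nn: "0 \<le> q' m a b" if "a \<in> {1..r}" "b \<in> {1..r}" "a \<noteq> b" "1 \<le> m" for m a b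
    using probb[of a b 1 m 1] that by (metis atLeastAtMost_iff le_refl measure_nonneg)
  define Z where "Z m = (\<lambda>(a, b, c, d). \<xi> m a b c d)" for m
  define Jo where "Jo m k i = {k}\<times>{1..r}\<times>{i}\<times>{1..m}" for m k i :: nat
  define Ji where "Ji m k i = {k}\<times>{1..r}\<times>{1..m}\<times>{i}" for m k i :: nat
  have finJ: "finite (Jo m k i)" "finite (Ji m k i)" for m k i unfolding Jo_def Ji_def by auto
  have indo: "indep_vars (\<lambda>_. borel) (Z m) (Jo m k i)" if "k \<in> {1..r}" "i \<in> {1..m}" for m k i
    unfolding Z_def Jo_def by (rule indep_vars_subset[OF indep[of m]]) (use that in auto)
  have indi: "indep_vars (\<lambda>_. borel) (Z m) (Ji m k i)" if "k \<in> {1..r}" "i \<in> {1..m}" for m k i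
    unfolding Z_def Ji_def by (rule indep_vars_subset[OF indep[of m]]) (use that in auto)
  have aeo: "AE x in M. Z m t x \<in> {0, 1}" if "k \<in> {1..r}" "i \<in> {1..m}" "t \<in> Jo m k i" for m k i t
    using that aeb unfolding Z_def Jo_def by auto
  have aei: "AE x in M. Z m t x \<in> {0, 1}" if "k \<in> {1..r}" "i \<in> {1..m}" "t \<in> Ji m k i" for m k i t
    using that aeb unfolding Z_def Ji_def by auto
  have so: "out_deg r \<xi> m k i x = (\<Sum>t\<in>Jo m k i. Z m t x)" for m k i x
    unfolding out_deg_sum Jo_def Z_def by (intro sum.cong) auto
  have si: "in_deg r \<xi> m k i x = (\<Sum>t\<in>Ji m k i. Z m t x)" for m k i x
    unfolding in_deg_sum Ji_def Z_def by (intro sum.cong) auto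
  have Psum: "(\<Sum>b\<in>{1..r}. \<Sum>d\<in>{1..m}. (if k = b then q m else q' m k b))
      = real m * q m + real m * (\<Sum>b\<in>{1..r}-{k}. q' m k b)" if "k \<in> {1..r}" for m k
  proof -
    have "(\<Sum>b\<in>{1..r}. \<Sum>d\<in>{1..m}. (if k = b then q m else q' m k b))
        = real m * (\<Sum>b\<in>{1..r}. (if k = b then q m else q' m k b))"
      by (simp add: sum_distrib_left)
    also have "(\<Sum>b\<in>{1..r}. (if k = b then q m else q' m k b)) = q m + (\<Sum>b\<in>{1..r}-{k}. q' m k b)"
      using that by (subst sum.remove[of _ k]) auto
    finally show ?thesis by (simp add: algebra_simps)
  qed
  have muo: "(\<Sum>t\<in>Jo m k i. prob {x\<in>space M. Z m t x = 1})
      = real m * q m + real m * (\<Sum>b\<in>{1..r}-{k}. q' m k b)" if "k \<in> {1..r}" "i \<in> {1..m}" for m k i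
  proof -
    have "(\<Sum>t\<in>Jo m k i. prob {x\<in>space M. Z m t x = 1})
       = (\<Sum>(a,b,c,d)\<in>{k}\<times>{1..r}\<times>{i}\<times>{1..m}. prob {x\<in>space M. \<xi> m a b c d x = 1})"
      unfolding Jo_def Z_def by (intro sum.cong) auto
    also have "\<dots> = (\<Sum>b\<in>{1..r}. \<Sum>d\<in>{1..m}. (if k = b then q m else q' m k b))"
      unfolding sum4o using that by (intro sum.cong refl) (auto simp: probb)
    finally show ?thesis using Psum[OF that(1)] by simp
  qed
  have mui: "(\<Sum>t\<in>Ji m k i. prob {x\<in>space M. Z m t x = 1})
      = real m * q m + real m * (\<Sum>b\<in>{1..r}-{k}. q' m k b)" if "k \<in> {1..r}" "i \<in> {1..m}" for m k i
  proof -
    have "(\<Sum>t\<in>Ji m k i. prob {x\<in>space M. Z m t x = 1})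
       = (\<Sum>(a,b,c,d)\<in>{k}\<times>{1..r}\<times>{1..m}\<times>{i}. prob {x\<in>space M. \<xi> m a b c d x = 1})"
      unfolding Ji_def Z_def by (intro sum.cong) auto
    also have "\<dots> = (\<Sum>b\<in>{1..r}. \<Sum>d\<in>{1..m}. (if k = b then q m else q' m k b))"
      unfolding sum4i using that by (intro sum.cong refl) (auto simp: probb)
    finally show ?thesis using Psum[OF that(1)] by simp
  qed
  have step: "AE x in M. eventually (\<lambda>m. \<forall>k\<in>{1..r}. \<forall>i\<in>{1..m}.
       real m * q m * (1 - e) < out_deg r \<xi> m k i x \<and> out_deg r \<xi> m k i x < real m * q m * (1 + e) \<and>
       real m * q m * (1 - e) < in_deg r \<xi> m k i x \<and> in_deg r \<xi> m k i x < real m * q m * (1 + e)) sequentially"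
    if e: "0 < e" "e \<le> 1" for e
  proof -
    define c1 where "c1 = e / (4 * real r)"
    have c1: "0 < c1" using e r0 by (simp add: c1_def)
    define P where "P = {(k, b). k \<in> {1..r} \<and> b \<in> {1..r} \<and> k \<noteq> b}"
    have finP: "finite P" unfolding P_def by (rule finite_subset[of _ "{1..r} \<times> {1..r}"]) auto
    have ev1: "eventually (\<lambda>m. \<forall>p\<in>P. norm (q' m (fst p) (snd p)) \<le> c1 * norm (q m)) sequentially"
    proof (rule eventually_ball_finite[OF finP], safe)
      fix a b assume "(a, b) \<in> P"
      then have "a \<in> {1..r}" "b \<in> {1..r}" "a \<noteq> b" by (auto simp: P_def)
      from landau_o.smallD[OF qsmall[OF this] c1]
      show "eventually (\<lambda>m. norm (q' m (fst (a, b)) (snd (a, b))) \<le> c1 * norm (q m)) sequentially" by simp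
    qed
    define c2 where "c2 = e\<^sup>2 / (48 * real r)"
    have c2: "0 < c2" using e r0 by (simp add: c2_def)
    have ev2: "eventually (\<lambda>m. norm (1 / q m) \<le> c2 * norm (real (m * r) / ln (real (m * r)))) sequentially"
      by (rule landau_o.smallD[OF qdense c2])
    have ev3: "eventually (\<lambda>m. 2 \<le> m) sequentially" by (rule eventually_ge_at_top)
    obtain m0 where m0: "\<And>m. m \<ge> m0 \<Longrightarrow> (\<forall>p\<in>P. norm (q' m (fst p) (snd p)) \<le> c1 * norm (q m)) \<and>
        norm (1 / q m) \<le> c2 * norm (real (m * r) / ln (real (m * r))) \<and> 2 \<le> m"
      using eventually_conj[OF ev1 eventually_conj[OF ev2 ev3]] unfolding eventually_sequentially by blast
    have cond: "2 \<le> m \<and> (\<forall>k\<in>{1..r}. (\<Sum>b\<in>{1..r}-{k}. q' m k b) \<le> e / 4 * q m)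
        \<and> 3 * ln (real m) \<le> real m * q m * e\<^sup>2 / 16" if mm: "m \<ge> m0" for m
    proof (intro conjI ballI)
      note h = m0[OF mm]
      show m2: "2 \<le> m" using h by simp
      have qp: "0 < q m" using qpos[of m] m2 by simp
      fix k assume k: "k \<in> {1..r}"
      have "(\<Sum>b\<in>{1..r}-{k}. q' m k b) \<le> real (card ({1..r}-{k})) * (c1 * q m)"
      proof (rule sum_bounded_above)
        fix b assume b: "b \<in> {1..r}-{k}"
        then have "(k, b) \<in> P" using k by (auto simp: P_def)
        then have "norm (q' m k b) \<le> c1 * norm (q m)" using h by auto
        then show "q' m k b \<le> c1 * q m" using qp by auto
      qed
      also have "\<dots> \<le> real r * (c1 * q m)"
      proof (rule mult_right_mono)
        have "card ({1..r}-{k}) \<le> card {1..r}" by (rule card_mono) auto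
        then show "real (card ({1..r}-{k})) \<le> real r" by simp
      qed (use c1 qp in simp)
      also have "\<dots> = e / 4 * q m" using r0 by (simp add: c1_def)
      finally show "(\<Sum>b\<in>{1..r}-{k}. q' m k b) \<le> e / 4 * q m" .
    next
      note h = m0[OF mm]
      have m2: "2 \<le> m" using h by simp
      have qp: "0 < q m" using qpos[of m] m2 by simp
      define N where "N = real (m * r)"
      have N2: "2 \<le> N" using m2 assms(2) unfolding N_def
        by (metis (mono_tags, lifting) mult.right_neutral mult_le_mono numeral_le_real_of_nat_iff of_nat_le_iff order.trans)
      have Lp: "0 < ln N" using N2 by simp
      have "1 / q m \<le> c2 * (N / ln N)" using h qp Lp N2 by (simp add: N_def)
      then have "ln N \<le> c2 * N * q m" using qp Lp by (simp add: field_simps)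
      also have "\<dots> = e\<^sup>2 * real m * q m / 48" using r0 by (simp add: c2_def N_def)
      finally have 1: "ln N \<le> e\<^sup>2 * real m * q m / 48" .
      have "ln (real m) \<le> ln N" unfolding N_def using m2 assms(2) by simp
      then show "3 * ln (real m) \<le> real m * q m * e\<^sup>2 / 16" using 1 by (simp add: algebra_simps)
    qed
    define A where "A m = real m * q m" for m
    define E where "E m k i = {x\<in>space M. A m * (1 + e) \<le> out_deg r \<xi> m k i x}
        \<union> {x\<in>space M. out_deg r \<xi> m k i x \<le> A m * (1 - e)}
        \<union> {x\<in>space M. A m * (1 + e) \<le> in_deg r \<xi> m k i x}
        \<union> {x\<in>space M. in_deg r \<xi> m k i x \<le> A m * (1 - e)}" for m k i
    have Em: "E m k i \<in> sets M" if ki: "k \<in> {1..r}" "i \<in> {1..m}" for m k i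
    proof -
      have om[measurable]: "(\<lambda>x. out_deg r \<xi> m k i x) \<in> borel_measurable M"
        unfolding out_deg_def using ki by (intro borel_measurable_sum meas) auto
      have im[measurable]: "(\<lambda>x. in_deg r \<xi> m k i x) \<in> borel_measurable M"
        unfolding in_deg_def using ki by (intro borel_measurable_sum meas) auto
      show ?thesis unfolding E_def by measurable
    qed
    have Eb: "prob (E m k i) \<le> 4 * inverse (real m ^ 3)" if mm: "m \<ge> m0" and ki: "k \<in> {1..r}" "i \<in> {1..m}" for m k i
    proof -
      note c = cond[OF mm]
      have m2: "2 \<le> m" using c by simp
      have qp: "0 < q m" using qpos[of m] m2 by simp
      have Ap: "0 < A m" using qp m2 by (simp add: A_def)
      have snn: "0 \<le> (\<Sum>b\<in>{1..r}-{k}. q' m k b)" using m2 by (intro sum_nonneg q'nn) (use ki in auto)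
      have sle: "(\<Sum>b\<in>{1..r}-{k}. q' m k b) \<le> e / 4 * q m" using c ki by auto
      have mu1: "A m \<le> real m * q m + real m * (\<Sum>b\<in>{1..r}-{k}. q' m k b)"
        using snn by (simp add: A_def)
      have mu2: "real m * q m + real m * (\<Sum>b\<in>{1..r}-{k}. q' m k b) \<le> A m * (1 + e / 4)"
      proof -
        have "real m * (\<Sum>b\<in>{1..r}-{k}. q' m k b) \<le> real m * (e / 4 * q m)"
          using sle by (intro mult_left_mono) auto
        then show ?thesis by (simp add: A_def algebra_simps)
      qed
      have ex: "exp (- (A m * e\<^sup>2 / 16)) \<le> inverse (real m ^ 3)"
      proof -
        have "exp (- (A m * e\<^sup>2 / 16)) \<le> exp (- (3 * ln (real m)))"
          using c by (simp add: A_def)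
        also have "exp (3 * ln (real m)) = real m ^ 3"
          using exp_of_nat_mult[of 3 "ln (real m)"] m2 by simp
        then have "exp (- (3 * ln (real m))) = inverse (real m ^ 3)" by (simp add: exp_minus)
        finally show ?thesis .
      qed
      have mo1: "A m \<le> (\<Sum>t\<in>Jo m k i. prob {x\<in>space M. Z m t x = 1})" using mu1 muo[OF ki] by simp
      have mo2: "(\<Sum>t\<in>Jo m k i. prob {x\<in>space M. Z m t x = 1}) \<le> A m * (1 + e / 4)" using mu2 muo[OF ki] by simp
      have mi1: "A m \<le> (\<Sum>t\<in>Ji m k i. prob {x\<in>space M. Z m t x = 1})" using mu1 mui[OF ki] by simp
      have mi2: "(\<Sum>t\<in>Ji m k i. prob {x\<in>space M. Z m t x = 1}) \<le> A m * (1 + e / 4)" using mu2 mui[OF ki] by simp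
      have b1: "prob {x\<in>space M. A m * (1 + e) \<le> out_deg r \<xi> m k i x} \<le> inverse (real m ^ 3)"
        using dev_bound(1)[OF finJ(1) indo[OF ki] aeo[OF ki] Ap e mo1 mo2] ex unfolding so by simp
      have b2: "prob {x\<in>space M. out_deg r \<xi> m k i x \<le> A m * (1 - e)} \<le> inverse (real m ^ 3)"
        using dev_bound(2)[OF finJ(1) indo[OF ki] aeo[OF ki] Ap e mo1 mo2] ex unfolding so by simp
      have b3: "prob {x\<in>space M. A m * (1 + e) \<le> in_deg r \<xi> m k i x} \<le> inverse (real m ^ 3)"
        using dev_bound(1)[OF finJ(2) indi[OF ki] aei[OF ki] Ap e mi1 mi2] ex unfolding si by simp
      have b4: "prob {x\<in>space M. in_deg r \<xi> m k i x \<le> A m * (1 - e)} \<le> inverse (real m ^ 3)"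
        using dev_bound(2)[OF finJ(2) indi[OF ki] aei[OF ki] Ap e mi1 mi2] ex unfolding si by simp
      have om[measurable]: "(\<lambda>x. out_deg r \<xi> m k i x) \<in> borel_measurable M"
        unfolding out_deg_def using ki by (intro borel_measurable_sum meas) auto
      have im[measurable]: "(\<lambda>x. in_deg r \<xi> m k i x) \<in> borel_measurable M"
        unfolding in_deg_def using ki by (intro borel_measurable_sum meas) auto
      define U1 where "U1 = {x\<in>space M. A m * (1 + e) \<le> out_deg r \<xi> m k i x}"
      define U2 where "U2 = {x\<in>space M. out_deg r \<xi> m k i x \<le> A m * (1 - e)}"
      define U3 where "U3 = {x\<in>space M. A m * (1 + e) \<le> in_deg r \<xi> m k i x}"
      define U4 where "U4 = {x\<in>space M. in_deg r \<xi> m k i x \<le> A m * (1 - e)}"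
      have s: "U1 \<in> sets M" "U2 \<in> sets M" "U3 \<in> sets M" "U4 \<in> sets M"
        unfolding U1_def U2_def U3_def U4_def by measurable
      have "prob (E m k i) \<le> prob (U1 \<union> U2 \<union> U3) + prob U4"
        unfolding E_def U1_def[symmetric] U2_def[symmetric] U3_def[symmetric] U4_def[symmetric]
        by (rule measure_Un_le) (use s in auto)
      also have "prob (U1 \<union> U2 \<union> U3) \<le> prob (U1 \<union> U2) + prob U3"
        by (rule measure_Un_le) (use s in auto)
      also have "prob (U1 \<union> U2) \<le> prob U1 + prob U2"
        by (rule measure_Un_le) (use s in auto)
      finally have "prob (E m k i) \<le> prob U1 + prob U2 + prob U3 + prob U4" by simp
      then show ?thesis using b1 b2 b3 b4 unfolding U1_def U2_def U3_def U4_def by simp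
    qed
    define Bad where "Bad m = (\<Union>p\<in>{1..r}\<times>{1..m}. E m (fst p) (snd p))" for m
    have Badm: "Bad m \<in> sets M" for m
      unfolding Bad_def by (rule sets.finite_UN) (auto intro!: Em)
    have Badb: "prob (Bad m) \<le> 4 * real r * inverse (real m ^ 2)" if mm: "m \<ge> m0" for m
    proof -
      have m2: "2 \<le> m" using cond[OF mm] by simp
      have "prob (Bad m) \<le> (\<Sum>p\<in>{1..r}\<times>{1..m}. prob (E m (fst p) (snd p)))"
        unfolding Bad_def by (rule measure_UNION_le) (auto intro!: Em)
      also have "\<dots> \<le> (\<Sum>p\<in>{1..r}\<times>{1..m}. 4 * inverse (real m ^ 3))"
        by (rule sum_mono) (auto intro!: Eb mm)
      also have "\<dots> = real r * real m * (4 * inverse (real m ^ 3))" by simp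
      also have "\<dots> = 4 * real r * inverse (real m ^ 2)" using m2
        by (simp add: field_simps power2_eq_square power3_eq_cube)
      finally show ?thesis .
    qed
    have summ: "summable (\<lambda>m. prob (Bad m))"
    proof (rule summable_comparison_test_ev)
      show "eventually (\<lambda>m. norm (prob (Bad m)) \<le> 4 * real r * inverse (real m ^ 2)) sequentially"
        unfolding eventually_sequentially using Badb by auto
      show "summable (\<lambda>m. 4 * real r * inverse (real m ^ 2))"
        by (intro summable_mult inverse_power_summable) simp
    qed
    have "AE x in M. eventually (\<lambda>m. x \<in> space M - Bad m) sequentially"
      by (rule borel_cantelli_AE1[OF Badm]) (auto intro: summ simp: emeasure_eq_measure)
    then show ?thesis
    proof (rule AE_mp, intro AE_I2 impI)
      fix x assume ev: "eventually (\<lambda>m. x \<in> space M - Bad m) sequentially" and x: "x \<in> space M"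
      show "eventually (\<lambda>m. \<forall>k\<in>{1..r}. \<forall>i\<in>{1..m}.
       real m * q m * (1 - e) < out_deg r \<xi> m k i x \<and> out_deg r \<xi> m k i x < real m * q m * (1 + e) \<and>
       real m * q m * (1 - e) < in_deg r \<xi> m k i x \<and> in_deg r \<xi> m k i x < real m * q m * (1 + e)) sequentially"
        using ev
      proof (rule eventually_mono)
        fix m assume "x \<in> space M - Bad m"
        then have "x \<notin> E m k i" if "k \<in> {1..r}" "i \<in> {1..m}" for k i
          using that unfolding Bad_def by force
        then show "\<forall>k\<in>{1..r}. \<forall>i\<in>{1..m}.
          real m * q m * (1 - e) < out_deg r \<xi> m k i x \<and> out_deg r \<xi> m k i x < real m * q m * (1 + e) \<and>
          real m * q m * (1 - e) < in_deg r \<xi> m k i x \<and> in_deg r \<xi> m k i x < real m * q m * (1 + e)"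
          using x unfolding E_def A_def by (auto simp: not_le)
      qed
    qed
  qed
  have r1: "real r \<ge> 1" using assms(2) by simp
  show ?thesis
  proof
    show "\<exists>C::real. AE x in M.
            limsup (\<lambda>m. ereal (SUP (k, i) \<in> {1..r} \<times> {1..m}.
                1 / q m * (out_deg r \<xi> m k i x / real (m * r) + in_deg r \<xi> m k i x / real (m * r))))
            \<le> ereal C"
    proof (rule exI[of _ 4])
      show "AE x in M. limsup (\<lambda>m. ereal (SUP (k, i) \<in> {1..r} \<times> {1..m}.
                1 / q m * (out_deg r \<xi> m k i x / real (m * r) + in_deg r \<xi> m k i x / real (m * r))))
            \<le> ereal 4"
        using step[of 1, OF zero_less_one order_refl]
      proof (rule AE_mp, intro AE_I2 impI)
        fix x assume ev: "eventually (\<lambda>m. \<forall>k\<in>{1..r}. \<forall>i\<in>{1..m}.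
           real m * q m * (1 - 1) < out_deg r \<xi> m k i x \<and> out_deg r \<xi> m k i x < real m * q m * (1 + 1) \<and>
           real m * q m * (1 - 1) < in_deg r \<xi> m k i x \<and> in_deg r \<xi> m k i x < real m * q m * (1 + 1)) sequentially"
        show "limsup (\<lambda>m. ereal (SUP (k, i) \<in> {1..r} \<times> {1..m}.
                1 / q m * (out_deg r \<xi> m k i x / real (m * r) + in_deg r \<xi> m k i x / real (m * r))))
            \<le> ereal 4"
        proof (rule Limsup_bounded)
          show "eventually (\<lambda>m. ereal (SUP (k, i) \<in> {1..r} \<times> {1..m}.
                1 / q m * (out_deg r \<xi> m k i x / real (m * r) + in_deg r \<xi> m k i x / real (m * r)))
            \<le> ereal 4) sequentially"
            using eventually_conj[OF ev eventually_ge_at_top[of 1]]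
          proof (rule eventually_mono, clarify)
            fix m assume h: "\<forall>k\<in>{1..r}. \<forall>i\<in>{1..m}.
               real m * q m * (1 - 1) < out_deg r \<xi> m k i x \<and> out_deg r \<xi> m k i x < real m * q m * (1 + 1) \<and>
               real m * q m * (1 - 1) < in_deg r \<xi> m k i x \<and> in_deg r \<xi> m k i x < real m * q m * (1 + 1)"
              and m1: "1 \<le> m"
            have qp: "0 < q m" using qpos m1 by simp
            have "(SUP (k, i) \<in> {1..r} \<times> {1..m}.
                1 / q m * (out_deg r \<xi> m k i x / real (m * r) + in_deg r \<xi> m k i x / real (m * r))) \<le> 4"
            proof (rule cSUP_least)
              show "{1..r} \<times> {1..m} \<noteq> {}" using m1 assms(2) by auto
            next
              fix p assume p: "p \<in> {1..r} \<times> {1..m}"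
              obtain k i where ki: "p = (k, i)" "k \<in> {1..r}" "i \<in> {1..m}" using p by auto
              show "(case p of (k, i) \<Rightarrow> 1 / q m * (out_deg r \<xi> m k i x / real (m * r) + in_deg r \<xi> m k i x / real (m * r))) \<le> 4"
                unfolding ki(1) prod.case
              proof (rule sum_aux[OF qp, where A = "real m * q m" and R = "real r"])
                show "0 < real (m * r)" using m1 r0 by simp
                show "out_deg r \<xi> m k i x < real m * q m * 2" using h ki by auto
                show "in_deg r \<xi> m k i x < real m * q m * 2" using h ki by auto
                show "real m * q m = real (m * r) / real r * q m" using r0 by simp
              qed (rule r1)
            qed
            then show "ereal (SUP (k, i) \<in> {1..r} \<times> {1..m}.
                1 / q m * (out_deg r \<xi> m k i x / real (m * r) + in_deg r \<xi> m k i x / real (m * r)))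
              \<le> ereal 4" by simp
          qed
        qed
      qed
    qed
  next
    have "AE x in M. \<forall>n. eventually (\<lambda>m. \<forall>k\<in>{1..r}. \<forall>i\<in>{1..m}.
       real m * q m * (1 - 1 / Suc n) < out_deg r \<xi> m k i x \<and> out_deg r \<xi> m k i x < real m * q m * (1 + 1 / Suc n) \<and>
       real m * q m * (1 - 1 / Suc n) < in_deg r \<xi> m k i x \<and> in_deg r \<xi> m k i x < real m * q m * (1 + 1 / Suc n)) sequentially"
      unfolding AE_all_countable by (intro allI step) auto
    then show "AE x in M.
            (\<lambda>m. SUP (k, i) \<in> {1..r} \<times> {1..m}.
                \<bar>out_deg r \<xi> m k i x / (real (m * r) * q m) - 1 / real r\<bar>) \<longlonglongrightarrow> 0"
    proof (rule AE_mp, intro AE_I2 impI)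
      fix x assume ev: "\<forall>n. eventually (\<lambda>m. \<forall>k\<in>{1..r}. \<forall>i\<in>{1..m}.
       real m * q m * (1 - 1 / Suc n) < out_deg r \<xi> m k i x \<and> out_deg r \<xi> m k i x < real m * q m * (1 + 1 / Suc n) \<and>
       real m * q m * (1 - 1 / Suc n) < in_deg r \<xi> m k i x \<and> in_deg r \<xi> m k i x < real m * q m * (1 + 1 / Suc n)) sequentially"
      show "(\<lambda>m. SUP (k, i) \<in> {1..r} \<times> {1..m}.
                \<bar>out_deg r \<xi> m k i x / (real (m * r) * q m) - 1 / real r\<bar>) \<longlonglongrightarrow> 0"
        unfolding tendsto_iff
      proof (intro allI impI)
        fix \<epsilon> :: real assume \<epsilon>: "0 < \<epsilon>"
        obtain n where n: "inverse (real (Suc n)) < \<epsilon>" using reals_Archimedean[OF \<epsilon>] by blast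
        show "eventually (\<lambda>m. dist (SUP (k, i) \<in> {1..r} \<times> {1..m}.
                \<bar>out_deg r \<xi> m k i x / (real (m * r) * q m) - 1 / real r\<bar>) 0 < \<epsilon>) sequentially"
          using eventually_conj[OF ev[rule_format, of n] eventually_ge_at_top[of 1]]
        proof (rule eventually_mono, clarify)
          fix m assume h: "\<forall>k\<in>{1..r}. \<forall>i\<in>{1..m}.
           real m * q m * (1 - 1 / Suc n) < out_deg r \<xi> m k i x \<and> out_deg r \<xi> m k i x < real m * q m * (1 + 1 / Suc n) \<and>
           real m * q m * (1 - 1 / Suc n) < in_deg r \<xi> m k i x \<and> in_deg r \<xi> m k i x < real m * q m * (1 + 1 / Suc n)"
            and m1: "1 \<le> m"
          have qp: "0 < q m" using qpos m1 by simp
          have Ap: "0 < real m * q m" using qp m1 by simp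
          have ne: "{1..r} \<times> {1..m} \<noteq> {}" using m1 assms(2) by auto
          have tm: "\<bar>out_deg r \<xi> m k i x / (real (m * r) * q m) - 1 / real r\<bar> \<le> 1 / Suc n"
            if "k \<in> {1..r}" "i \<in> {1..m}" for k i
          proof -
            have eq: "real (m * r) * q m = real m * q m * real r" by simp
            have "\<bar>out_deg r \<xi> m k i x / (real m * q m * real r) - 1 / real r\<bar> \<le> 1 / Suc n"
              using h that by (intro dev_aux[OF Ap r1]) auto
            then show ?thesis unfolding eq .
          qed
          have le: "(SUP (k, i) \<in> {1..r} \<times> {1..m}.
                \<bar>out_deg r \<xi> m k i x / (real (m * r) * q m) - 1 / real r\<bar>) \<le> 1 / Suc n"
          proof (rule cSUP_least[OF ne])
            fix p assume "p \<in> {1..r} \<times> {1..m}"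
            then obtain k i where "p = (k, i)" "k \<in> {1..r}" "i \<in> {1..m}" by auto
            then show "(case p of (k, i) \<Rightarrow> \<bar>out_deg r \<xi> m k i x / (real (m * r) * q m) - 1 / real r\<bar>) \<le> 1 / Suc n"
              using tm by simp
          qed
          have ge: "0 \<le> (SUP (k, i) \<in> {1..r} \<times> {1..m}.
                \<bar>out_deg r \<xi> m k i x / (real (m * r) * q m) - 1 / real r\<bar>)"
          proof -
            have mem: "(1, 1) \<in> {1..r} \<times> {1..m}" using m1 assms(2) by auto
            have bdd: "bdd_above ((\<lambda>(k, i). \<bar>out_deg r \<xi> m k i x / (real (m * r) * q m) - 1 / real r\<bar>) ` ({1..r} \<times> {1..m}))"
              by (intro bdd_above_finite finite_imageI) auto
            show ?thesis by (rule cSUP_upper2[OF bdd mem]) simp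
          qed
          show "dist (SUP (k, i) \<in> {1..r} \<times> {1..m}.
                \<bar>out_deg r \<xi> m k i x / (real (m * r) * q m) - 1 / real r\<bar>) 0 < \<epsilon>"
            using le ge n by (simp add: inverse_eq_divide)
        qed
      qed
    qed
  qed
qed

end
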